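(* Let $E$ be a finite set, $\omega:2^E\to[0,\infty)$, and suppose $Z=Z(\omega;\mathbf{y})$ is Rayleigh. Let $e,f,g\in E$ be distinct. Then for all $\mathbf{y}$ with all $y_c>0$, $$\Theta Z\{e,f|g\}\ge -2\sqrt{\Delta Z^g\{e,f\}\,\Delta Z_g\{e,f\}},$$ where $\Theta Z\{e,f|g\}=Z_e^{fg}Z_{fg}^e+Z_f^{eg}Z_{eg}^f-Z_g^{ef}Z_{ef}^g-Z_{efg}Z^{efg}$.
   Context: $Z(\omega;\mathbf{y})=\sum_{S\subseteq E}\omega(S)\prod_{e\in S}y_e$ with $\omega$ not identically zero. For a multiaffine polynomial $Z$, superscripts denote setting the indicated variables to $0$ and subscripts denote partial differentiation in the indicated variables, e.g. $Z_e^{fg}=(\partial Z/\partial y_e)|_{y_f=y_g=0}$. $\Delta Z\{e,f\}=Z_eZ_f-Z_{ef}Z$; $\Delta Z^g\{e,f\}$ and $\Delta Z_g\{e,f\}$ denote this quantity computed for the polynomials $Z^g$ and $Z_g$ respectively. $Z$ is Rayleigh if $\Delta Z\{e,f\}(\mathbf{y})\ge0$ for all distinct $e,f$ and all $\mathbf{y}>0$ coordinatewise. *)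

theory Defs
  imports "HOL-Analysis.Analysis"
begin

text \<open>A multiaffine polynomial Z(w;y) = sum over S subseteq E of w(S) * prod_{e in S} y_e,
  represented by its coefficient function w on subsets of the ground set E.\<close>

definition Zpoly :: "'a set \<Rightarrow> ('a set \<Rightarrow> real) \<Rightarrow> ('a \<Rightarrow> real) \<Rightarrow> real" where
  "Zpoly E w y = (\<Sum>S\<in>Pow E. w S * (\<Prod>e\<in>S. y e))"

text \<open>Partial derivative in y_e of a multiaffine polynomial, at the coefficient level:
  coefficient of S in Z_e is w(S + e) if e notin S, and 0 otherwise.\<close>
definition pdiff :: "'a \<Rightarrow> ('a set \<Rightarrow> real) \<Rightarrow> ('a set \<Rightarrow> real)" where
  "pdiff e w = (\<lambda>S. if e \<in> S then 0 else w (insert e S))"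

text \<open>Setting y_e := 0, at the coefficient level.\<close>
definition setzero :: "'a \<Rightarrow> ('a set \<Rightarrow> real) \<Rightarrow> ('a set \<Rightarrow> real)" where
  "setzero e w = (\<lambda>S. if e \<in> S then 0 else w S)"

definition DeltaZ :: "'a set \<Rightarrow> ('a set \<Rightarrow> real) \<Rightarrow> 'a \<Rightarrow> 'a \<Rightarrow> ('a \<Rightarrow> real) \<Rightarrow> real" where
  "DeltaZ E w e f y = Zpoly E (pdiff e w) y * Zpoly E (pdiff f w) y
                      - Zpoly E (pdiff e (pdiff f w)) y * Zpoly E w y"

definition rayleigh :: "'a set \<Rightarrow> ('a set \<Rightarrow> real) \<Rightarrow> bool" where
  "rayleigh E w \<longleftrightarrow> (\<forall>e\<in>E. \<forall>f\<in>E. e \<noteq> f \<longrightarrow>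
      (\<forall>y. (\<forall>c\<in>E. y c > 0) \<longrightarrow> DeltaZ E w e f y \<ge> 0))"

definition ThetaZ :: "'a set \<Rightarrow> ('a set \<Rightarrow> real) \<Rightarrow> 'a \<Rightarrow> 'a \<Rightarrow> 'a \<Rightarrow> ('a \<Rightarrow> real) \<Rightarrow> real" where
  "ThetaZ E w e f g y =
     Zpoly E (setzero f (setzero g (pdiff e w))) y * Zpoly E (setzero e (pdiff f (pdiff g w))) y
   + Zpoly E (setzero e (setzero g (pdiff f w))) y * Zpoly E (setzero f (pdiff e (pdiff g w))) y
   - Zpoly E (setzero e (setzero f (pdiff g w))) y * Zpoly E (setzero g (pdiff e (pdiff f w))) y
   - Zpoly E (pdiff e (pdiff f (pdiff g w))) y * Zpoly E (setzero e (setzero f (setzero g w))) y"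

end

theory Submission imports Defs begin

definition van :: "'a \<Rightarrow> ('a set \<Rightarrow> real) \<Rightarrow> bool" where
  "van a w \<longleftrightarrow> (\<forall>S. a \<in> S \<longrightarrow> w S = 0)"

definition Zat :: "'a set \<Rightarrow> ('a set \<Rightarrow> real) \<Rightarrow> ('a \<Rightarrow> real) \<Rightarrow> real" where
  "Zat = Zpoly"

lemma van_pd [simp]: "van a (pdiff a w)" by (simp add: van_def pdiff_def)
lemma van_sz [simp]: "van a (setzero a w)" by (simp add: van_def setzero_def)
lemma van_pd2 [simp]: "van a w \<Longrightarrow> van a (pdiff b w)" by (simp add: van_def pdiff_def)
lemma van_sz2 [simp]: "van a w \<Longrightarrow> van a (setzero b w)" by (simp add: van_def setzero_def)
lemma van_0 [simp]: "van a (\<lambda>_. 0)" by (simp add: van_def)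

lemma sz_van [simp]: "van a w \<Longrightarrow> setzero a w = w"
  by (auto simp: van_def setzero_def fun_eq_iff)
lemma pd_van [simp]: "van a w \<Longrightarrow> pdiff a w = (\<lambda>_. 0)"
  by (auto simp: van_def pdiff_def fun_eq_iff)
lemma sz_0 [simp]: "setzero a (\<lambda>_. 0) = (\<lambda>_. 0)" by (simp add: setzero_def fun_eq_iff)
lemma pd_0 [simp]: "pdiff a (\<lambda>_. 0) = (\<lambda>_. 0)" by (simp add: pdiff_def fun_eq_iff)
lemma pd_sz [simp]: "a \<noteq> b \<Longrightarrow> pdiff a (setzero b w) = setzero b (pdiff a w)"
  by (auto simp: pdiff_def setzero_def fun_eq_iff)
lemma sz_comm: "setzero a (setzero b w) = setzero b (setzero a w)"
  by (auto simp: setzero_def fun_eq_iff)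
lemma pd_comm: "pdiff a (pdiff b w) = pdiff b (pdiff a w)"
  by (auto simp: pdiff_def fun_eq_iff insert_commute)
lemma Zat_0 [simp]: "Zat E (\<lambda>_. 0) y = 0" by (simp add: Zat_def Zpoly_def)

lemma zp_insert:
  assumes "finite E'" "a \<notin> E'"
  shows "Zpoly (insert a E') v y = (\<Sum>S\<in>Pow E'. v S * prod y S) + (\<Sum>S\<in>Pow E'. v (insert a S) * (y a * prod y S))"
proof -
  have inj: "inj_on (insert a) (Pow E')" using assms(2)
    by (smt (verit, ccfv_SIG) PowD inj_onI insert_ident subset_iff)
  have disj: "Pow E' \<inter> insert a ` Pow E' = {}" using assms(2) by auto
  have "Zpoly (insert a E') v y = (\<Sum>S\<in>Pow E'. v S * prod y S) + (\<Sum>S\<in>insert a ` Pow E'. v S * prod y S)"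
    unfolding Zpoly_def Pow_insert using assms(1) disj by (simp add: sum.union_disjoint)
  also have "(\<Sum>S\<in>insert a ` Pow E'. v S * prod y S) = (\<Sum>S\<in>Pow E'. v (insert a S) * prod y (insert a S))"
    using inj by (simp add: sum.reindex)
  also have "\<dots> = (\<Sum>S\<in>Pow E'. v (insert a S) * (y a * prod y S))"
    apply (rule sum.cong, simp)
    using assms by (subst prod.insert) (auto intro: finite_subset)
  finally show ?thesis .
qed

lemma zp_split:
  assumes "finite E" "a \<in> E"
  shows "Zpoly E w y = Zpoly E (setzero a w) y + y a * Zpoly E (pdiff a w) y"
proof -
  obtain E' where E: "E = insert a E'" "a \<notin> E'" "finite E'"
    using assms by (metis Set.set_insert finite_insert)
  have s1: "(\<Sum>S\<in>Pow E'. setzero a w S * prod y S) = (\<Sum>S\<in>Pow E'. w S * prod y S)"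
    using E by (intro sum.cong) (auto simp: setzero_def)
  have s2: "(\<Sum>S\<in>Pow E'. pdiff a w S * prod y S) = (\<Sum>S\<in>Pow E'. w (insert a S) * prod y S)"
    using E by (intro sum.cong) (auto simp: pdiff_def)
  have s3: "(\<Sum>S\<in>Pow E'. setzero a w (insert a S) * (y a * prod y S)) = 0"
    by (simp add: setzero_def)
  have s4: "(\<Sum>S\<in>Pow E'. pdiff a w (insert a S) * (y a * prod y S)) = 0"
    by (simp add: pdiff_def)
  show ?thesis unfolding E(1) using E
    by (simp only: zp_insert[OF E(3) E(2)] s1 s2 s3 s4) (simp add: sum_distrib_left algebra_simps)
qed

lemma zp_indep:
  assumes "van c X"
  shows "Zpoly E X (y(c:=t)) = Zpoly E X y"
  unfolding Zpoly_def
proof (rule sum.cong, simp)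
  fix S assume "S \<in> Pow E"
  show "X S * prod (y(c := t)) S = X S * prod y S"
  proof (cases "c \<in> S")
    case True then show ?thesis using assms by (simp add: van_def)
  next
    case False then have "prod (y(c := t)) S = prod y S" by (intro prod.cong) auto
    then show ?thesis by simp
  qed
qed

lemma split3:
  assumes "finite E" "a \<in> E" "b \<in> E" "c \<in> E"
  shows "Zpoly E w y =
     Zat E (setzero c (setzero b (setzero a w))) y
   + y c * Zat E (pdiff c (setzero b (setzero a w))) y
   + y b * Zat E (setzero c (pdiff b (setzero a w))) y
   + y b * y c * Zat E (pdiff c (pdiff b (setzero a w))) y
   + y a * Zat E (setzero c (setzero b (pdiff a w))) y
   + y a * y c * Zat E (pdiff c (setzero b (pdiff a w))) y
   + y a * y b * Zat E (setzero c (pdiff b (pdiff a w))) y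
   + y a * y b * y c * Zat E (pdiff c (pdiff b (pdiff a w))) y"
  unfolding Zat_def
  apply (subst zp_split[OF assms(1,2), of w y])
  apply (subst zp_split[OF assms(1,3), of "setzero a w" y])
  apply (subst zp_split[OF assms(1,3), of "pdiff a w" y])
  apply (subst zp_split[OF assms(1,4), of "setzero b (setzero a w)" y])
  apply (subst zp_split[OF assms(1,4), of "pdiff b (setzero a w)" y])
  apply (subst zp_split[OF assms(1,4), of "setzero b (pdiff a w)" y])
  apply (subst zp_split[OF assms(1,4), of "pdiff b (pdiff a w)" y])
  apply (simp add: algebra_simps)
  done

lemma split3Y:
  assumes "finite E" "a \<in> E" "b \<in> E" "c \<in> E" "a \<noteq> c" "b \<noteq> c"
  shows "Zpoly E w (y(c:=t)) =
     Zat E (setzero c (setzero b (setzero a w))) y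
   + t * Zat E (pdiff c (setzero b (setzero a w))) y
   + y b * Zat E (setzero c (pdiff b (setzero a w))) y
   + y b * t * Zat E (pdiff c (pdiff b (setzero a w))) y
   + y a * Zat E (setzero c (setzero b (pdiff a w))) y
   + y a * t * Zat E (pdiff c (setzero b (pdiff a w))) y
   + y a * y b * Zat E (setzero c (pdiff b (pdiff a w))) y
   + y a * y b * t * Zat E (pdiff c (pdiff b (pdiff a w))) y"
  using split3[OF assms(1-4), of w "y(c:=t)"] assms(5,6)
  unfolding Zat_def by (simp add: zp_indep)

lemma quad_pos:
  fixes p q r :: real
  assumes "\<forall>t>0. p + q*t + r*t^2 \<ge> 0"
  shows "p \<ge> 0"
proof (rule ccontr)
  assume "\<not> p \<ge> 0"
  define t where "t = min 1 (-p / (2*(\<bar>q\<bar>+\<bar>r\<bar>+1)))"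
  have "-p / (2*(\<bar>q\<bar>+\<bar>r\<bar>+1)) > 0" using \<open>\<not> p \<ge> 0\<close> by (intro divide_pos_pos) auto
  then have t0: "t > 0" "t \<le> 1" by (auto simp: t_def)
  define K where "K = \<bar>q\<bar>+\<bar>r\<bar>+1"
  have K: "K > 0" by (simp add: K_def add_nonneg_pos)
  have "t \<le> -p/(2*K)" by (simp add: t_def K_def)
  then have "t*K \<le> -p/(2*K)*K" using K by (intro mult_right_mono) auto
  also have "-p/(2*K)*K = -p/2" using K by (simp add: field_simps)
  finally have tK: "t*K \<le> -p/2" .
  have tK2: "t*K = \<bar>q\<bar>*t + \<bar>r\<bar>*t + t" by (simp add: K_def algebra_simps)
  moreover have "q*t \<le> \<bar>q\<bar>*t" using t0 by (simp add: mult_right_mono)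
  moreover have "r*t^2 \<le> \<bar>r\<bar>*t"
  proof -
    have "r*t^2 \<le> \<bar>r\<bar>*t^2" using t0 by (simp add: mult_right_mono)
    also have "\<dots> \<le> \<bar>r\<bar>*t" using t0 by (intro mult_left_mono) (auto simp: power2_eq_square mult_le_cancel_right1)
    finally show ?thesis .
  qed
  moreover have "p + q*t + r*t^2 \<ge> 0" using assms t0 by auto
  ultimately show False using \<open>\<not> p \<ge> 0\<close> t0 tK tK2 by linarith
qed

lemma quad:
  fixes p q r :: real
  assumes H: "\<forall>t>0. p + q*t + r*t^2 \<ge> 0"
  shows "q \<ge> - 2 * sqrt (p*r)"
proof -
  have p: "p \<ge> 0" using quad_pos[OF H] .
  have "\<forall>u>0. r + q*u + p*u^2 \<ge> 0"
  proof (intro allI impI)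
    fix u :: real assume s: "u > 0"
    have "1/u > 0" using s by simp
    then have "p + q*(1/u) + r*(1/u)^2 \<ge> 0" using H by blast
    then have "u^2 * (p + q*(1/u) + r*(1/u)^2) \<ge> 0" by simp
    moreover have "u^2 * (p + q*(1/u) + r*(1/u)^2) = r + q*u + p*u^2" using s
      by (simp add: field_simps power2_eq_square)
    ultimately show "r + q*u + p*u^2 \<ge> 0" by simp
  qed
  then have r: "r \<ge> 0" using quad_pos by blast
  show ?thesis
  proof (cases "p = 0 \<or> r = 0")
    case True
    have "q \<ge> 0"
    proof (rule ccontr)
      assume q: "\<not> q \<ge> 0"
      show False
      proof (cases "p = 0")
        case True
        define t where "t = -q / (2*(r+1))"
        have t: "t > 0" unfolding t_def using q r by (intro divide_pos_pos) auto
        have "q*t + r*t^2 \<ge> 0" using H t True by auto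
        then have "t*(q + r*t) \<ge> 0" by (simp add: algebra_simps power2_eq_square)
        then have "q + r*t \<ge> 0" using t by (simp add: zero_le_mult_iff)
        moreover have "r*t < -q"
        proof -
          have "(r+1)*t = -q/2" using r by (simp add: t_def field_simps)
          moreover have "r*t \<le> (r+1)*t" using t by (simp add: distrib_right)
          ultimately show ?thesis using q by linarith
        qed
        ultimately show False by simp
      next
        case False
        then have r0: "r = 0" using True by simp
        define t where "t = -p / q + 1"
        have t: "t > 0" using q p by (simp add: t_def divide_nonneg_neg)
        have "p + q*t \<ge> 0" using H t r0 by auto
        moreover have "p + q*t = q" using q by (simp add: t_def field_simps)
        ultimately show False using q by simp
      qed
    qed
    then show ?thesis using True by auto
  next
    case False
    then have pp: "p > 0" and rr: "r > 0" using p r by auto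
    define t where "t = sqrt (p/r)"
    have t: "t > 0" using pp rr by (simp add: t_def)
    have t2: "r*t^2 = p" using pp rr by (simp add: t_def)
    have "p + q*t + r*t^2 \<ge> 0" using H t by auto
    then have "q*t \<ge> -2*p" using t2 by simp
    moreover have "sqrt (p*r) * t = p" unfolding t_def using pp rr
      by (simp add: real_sqrt_mult[symmetric]) 
    ultimately have "q*t \<ge> -2 * sqrt (p*r) * t" by simp
    then show ?thesis using t by (metis mult_le_cancel_right_pos mult_minus_left)
  qed
qed


theorem proposition4p15:
  fixes E :: "'a set" and \<omega> :: "'a set \<Rightarrow> real" and e f g :: 'a and y :: "'a \<Rightarrow> real"
  assumes "finite E"
    and "\<forall>S\<subseteq>E. \<omega> S \<ge> 0"
    and "\<exists>S\<subseteq>E. \<omega> S \<noteq> 0"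
    and "rayleigh E \<omega>"
    and "e \<in> E" "f \<in> E" "g \<in> E" "e \<noteq> f" "e \<noteq> g" "f \<noteq> g"
    and "\<forall>c\<in>E. y c > 0"
  shows "ThetaZ E \<omega> e f g y \<ge>
           - 2 * sqrt (DeltaZ E (setzero g \<omega>) e f y * DeltaZ E (pdiff g \<omega>) e f y)"
proof -
  have ne: "e \<noteq> f" "e \<noteq> g" "f \<noteq> g" "f \<noteq> e" "g \<noteq> e" "g \<noteq> f" using assms(8-10) by auto
  have H: "\<forall>t>0. DeltaZ E (setzero g \<omega>) e f y + ThetaZ E \<omega> e f g y * t + DeltaZ E (pdiff g \<omega>) e f y * t^2 \<ge> 0"
  proof (intro allI impI)
    fix t :: real assume t: "t > 0"
    have pos: "\<forall>c\<in>E. (y(g:=t)) c > 0" using assms(11) t by auto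
    have "DeltaZ E \<omega> e f (y(g:=t)) \<ge> 0" using assms(4,5,6,8) pos unfolding rayleigh_def by blast
    moreover have "DeltaZ E \<omega> e f (y(g:=t)) = DeltaZ E (setzero g \<omega>) e f y + ThetaZ E \<omega> e f g y * t + DeltaZ E (pdiff g \<omega>) e f y * t^2"
      unfolding DeltaZ_def ThetaZ_def
      apply (simp only: split3Y[OF assms(1,5,6,7,9,10)])
      apply (simp only: split3[OF assms(1,5,6,7)])
      apply (simp add: ne sz_comm pd_comm)
      apply (simp add: algebra_simps power2_eq_square)
      done
    ultimately show "DeltaZ E (setzero g \<omega>) e f y + ThetaZ E \<omega> e f g y * t + DeltaZ E (pdiff g \<omega>) e f y * t^2 \<ge> 0" by simp
  qed
  show ?thesis using quad[OF H] .
qed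

end
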